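(* Let $H$ be a pre-Schreier monoid. Then $1s\Rightarrow 0s$, $3s\Rightarrow 0s$, $1s\Leftrightarrow 2s$, $2s\Rightarrow 3s$, $1s\Rightarrow 4s$, $2s\Rightarrow 5s$, $3s\Rightarrow 6s$, $4s\Leftrightarrow 5s$, $4s\Rightarrow 4's$, $5s\Rightarrow 5's$.
   Context: A monoid means a commutative cancellative monoid (written multiplicatively); $H^{\ast}$ is its unit group, $\mathbb{N}=\{1,2,\dots\}$, $\mathbb{N}_0=\{0,1,2,\dots\}$. Elements are relatively prime ($a\perp b$) if all their common divisors are units. $\mathrm{Sqf}\,H$: elements not of the form $b^2c$ with $b,c\in H$, $b\notin H^{\ast}$. $H$ is pre-Schreier if for all $a,b,c\in H$ with $a\mid bc$ there exist $a_1,a_2\in H$ with $a=a_1a_2$, $a_1\mid b$, $a_2\mid c$. The conditions, each required for every $a\in H$: 0s: $a=s_1\cdots s_n$ for some $n\in\mathbb{N}$, $s_i\in\mathrm{Sqf}\,H$; 1s: $a=s_1s_2^2\cdots s_n^n$ with $n\in\mathbb{N}$, $s_i\in\mathrm{Sqf}\,H$, $s_i\perp s_j$ for $i\ne j$; 2s: $a=s_1\cdots s_n$ with $n\in\mathbb{N}$, $s_i\in\mathrm{Sqf}\,H$, $s_i\mid s_{i+1}$ for $i<n$; 3s: $a=s_0s_1^2s_2^{2^2}\cdots s_n^{2^n}$ with $n\in\mathbb{N}_0$, $s_i\in\mathrm{Sqf}\,H$; 4s: $a=bc$ with $b\in H$, $c\in\mathrm{Sqf}\,H$, $b\perp c$,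 and some $d\in\mathrm{Sqf}\,H$ with $d^2\mid b$, $b\mid d^n$ for some $n\in\mathbb{N}$; 4's: $a=bc$ with $b\in H$, $c\in\mathrm{Sqf}\,H$, $b\perp c$, and every $d\in\mathrm{Sqf}\,H$ with $d\mid b$ satisfies $d^2\mid b$; 5s: $a=bc$ with $b\in H$, $c\in\mathrm{Sqf}\,H$ and $a\mid c^n$ for some $n\in\mathbb{N}$; 5's: $a=bc$ with $b\in H$, $c\in\mathrm{Sqf}\,H$ and every $d\in\mathrm{Sqf}\,H$ with $d\mid a$ satisfies $d\mid c$; 6s: $a=b^2c$ with $b\in H$, $c\in\mathrm{Sqf}\,H$. *)

theory Defs
  imports Main
begin

text \<open>A monoid is modelled as a type of class comm_monoid_mult (commutative monoid,
  written multiplicatively) together with the cancellation law.\<close>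

definition cancellative :: "'a::comm_monoid_mult itself \<Rightarrow> bool" where
  "cancellative T \<longleftrightarrow> (\<forall>a b c :: 'a. a * b = a * c \<longrightarrow> b = c)"

definition munit :: "'a::comm_monoid_mult \<Rightarrow> bool" where
  "munit a \<longleftrightarrow> a dvd 1"

definition relprime :: "'a::comm_monoid_mult \<Rightarrow> 'a \<Rightarrow> bool" where
  "relprime a b \<longleftrightarrow> (\<forall>d. d dvd a \<and> d dvd b \<longrightarrow> munit d)"

definition Sqf :: "'a::comm_monoid_mult \<Rightarrow> bool" where
  "Sqf a \<longleftrightarrow> \<not> (\<exists>b c. a = b^2 * c \<and> \<not> munit b)"

definition pre_Schreier :: "'a::comm_monoid_mult itself \<Rightarrow> bool" where
  "pre_Schreier T \<longleftrightarrow> (\<forall>a b c :: 'a. a dvd b * c \<longrightarrow>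
      (\<exists>a1 a2. a = a1 * a2 \<and> a1 dvd b \<and> a2 dvd c))"

definition cond0s :: "'a::comm_monoid_mult itself \<Rightarrow> bool" where
  "cond0s T \<longleftrightarrow> (\<forall>a :: 'a. \<exists>n::nat \<ge> 1. \<exists>s. (\<forall>i\<in>{1..n}. Sqf (s i)) \<and>
      a = (\<Prod>i=1..n. s i))"

definition cond1s :: "'a::comm_monoid_mult itself \<Rightarrow> bool" where
  "cond1s T \<longleftrightarrow> (\<forall>a :: 'a. \<exists>n::nat \<ge> 1. \<exists>s. (\<forall>i\<in>{1..n}. Sqf (s i)) \<and>
      (\<forall>i\<in>{1..n}. \<forall>j\<in>{1..n}. i \<noteq> j \<longrightarrow> relprime (s i) (s j)) \<and>
      a = (\<Prod>i=1..n. s i ^ i))"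

definition cond2s :: "'a::comm_monoid_mult itself \<Rightarrow> bool" where
  "cond2s T \<longleftrightarrow> (\<forall>a :: 'a. \<exists>n::nat \<ge> 1. \<exists>s. (\<forall>i\<in>{1..n}. Sqf (s i)) \<and>
      (\<forall>i. 1 \<le> i \<and> i < n \<longrightarrow> s i dvd s (i + 1)) \<and>
      a = (\<Prod>i=1..n. s i))"

definition cond3s :: "'a::comm_monoid_mult itself \<Rightarrow> bool" where
  "cond3s T \<longleftrightarrow> (\<forall>a :: 'a. \<exists>n::nat. \<exists>s. (\<forall>i\<in>{0..n}. Sqf (s i)) \<and>
      a = (\<Prod>i=0..n. s i ^ (2 ^ i)))"

definition cond4s :: "'a::comm_monoid_mult itself \<Rightarrow> bool" where
  "cond4s T \<longleftrightarrow> (\<forall>a :: 'a. \<exists>b c. a = b * c \<and> Sqf c \<and> relprime b c \<and>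
      (\<exists>d. Sqf d \<and> d^2 dvd b \<and> (\<exists>n::nat \<ge> 1. b dvd d ^ n)))"

definition cond4's :: "'a::comm_monoid_mult itself \<Rightarrow> bool" where
  "cond4's T \<longleftrightarrow> (\<forall>a :: 'a. \<exists>b c. a = b * c \<and> Sqf c \<and> relprime b c \<and>
      (\<forall>d. Sqf d \<and> d dvd b \<longrightarrow> d^2 dvd b))"

definition cond5s :: "'a::comm_monoid_mult itself \<Rightarrow> bool" where
  "cond5s T \<longleftrightarrow> (\<forall>a :: 'a. \<exists>b c. a = b * c \<and> Sqf c \<and>
      (\<exists>n::nat \<ge> 1. a dvd c ^ n))"

definition cond5's :: "'a::comm_monoid_mult itself \<Rightarrow> bool" where
  "cond5's T \<longleftrightarrow> (\<forall>a :: 'a. \<exists>b c. a = b * c \<and> Sqf c \<and>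
      (\<forall>d. Sqf d \<and> d dvd a \<longrightarrow> d dvd c))"

definition cond6s :: "'a::comm_monoid_mult itself \<Rightarrow> bool" where
  "cond6s T \<longleftrightarrow> (\<forall>a :: 'a. \<exists>b c. a = b^2 * c \<and> Sqf c)"

end

theory Submission imports Defs begin

lemma pow_le_dvd: "m \<le> n \<Longrightarrow> (a::'a::comm_monoid_mult) ^ m dvd a ^ n"
proof -
  assume "m \<le> n"
  then have "a ^ n = a ^ m * a ^ (n - m)" by (metis le_add_diff_inverse power_add)
  then show ?thesis by (metis dvd_triv_left)
qed

lemma munit_dvd: "munit u \<Longrightarrow> d dvd u \<Longrightarrow> munit d"
  unfolding munit_def using dvd_trans by blast

lemma munit_mult: "munit a \<Longrightarrow> munit b \<Longrightarrow> munit (a*b)"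
  unfolding munit_def by (metis mult_1_left mult_dvd_mono)

lemma munit_1: "munit 1" unfolding munit_def by simp

lemma munit_dvd_any: "munit u \<Longrightarrow> u dvd x"
  unfolding munit_def using dvd_trans one_dvd by blast

lemma Sqf_iff: "Sqf a \<longleftrightarrow> (\<forall>b. b^2 dvd a \<longrightarrow> munit b)"
  unfolding Sqf_def dvd_def by blast

lemma Sqf_dvd: "Sqf a \<Longrightarrow> d dvd a \<Longrightarrow> Sqf d"
  unfolding Sqf_iff using dvd_trans by blast

lemma Sqf_unit: "munit u \<Longrightarrow> Sqf u"
  unfolding Sqf_iff by (metis dvd_trans dvd_triv_left munit_dvd power2_eq_square)

lemma Sqf_1: "Sqf 1" by (rule Sqf_unit[OF munit_1])

lemma Sqf_coprime: "Sqf z \<Longrightarrow> x*y dvd z \<Longrightarrow> relprime x y"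
  unfolding relprime_def Sqf_iff
  by (metis dvd_trans mult_dvd_mono power2_eq_square)

lemma relprime_sym: "relprime a b \<Longrightarrow> relprime b a"
  unfolding relprime_def by blast

lemma relprime_dvd: "relprime a b \<Longrightarrow> a' dvd a \<Longrightarrow> relprime a' b"
  unfolding relprime_def using dvd_trans by blast

lemma relprime_unit: "munit u \<Longrightarrow> relprime u x"
  unfolding relprime_def using munit_dvd by blast

lemma relprime_1: "relprime a 1"
  unfolding relprime_def munit_def by blast

lemma PSD: "pre_Schreier (T::'a itself) \<Longrightarrow> (a::'a::comm_monoid_mult) dvd b * c \<Longrightarrow>
   \<exists>a1 a2. a = a1 * a2 \<and> a1 dvd b \<and> a2 dvd c"
  unfolding pre_Schreier_def by blast

lemma relprime_dvd_mult:
  assumes ps: "pre_Schreier (T::'a::comm_monoid_mult itself)"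
    and r: "relprime a b" and d: "(a::'a) dvd b * c" shows "a dvd c"
proof -
  obtain a1 a2 where a: "a = a1 * a2" "a1 dvd b" "a2 dvd c" using PSD[OF ps d] by blast
  have "a1 dvd a" using a(1) by simp
  then have "munit a1" using r a(2) unfolding relprime_def by blast
  then have "a1 dvd 1" unfolding munit_def .
  then have "a1 * a2 dvd 1 * c" using a(3) by (rule mult_dvd_mono)
  then show ?thesis using a(1) by simp
qed

lemma relprime_mult:
  assumes ps: "pre_Schreier (T::'a::comm_monoid_mult itself)"
    and "relprime a b" "relprime (a::'a) c" shows "relprime a (b*c)"
  unfolding relprime_def
proof (intro allI impI)
  fix d assume d: "d dvd a \<and> d dvd b * c"
  obtain d1 d2 where dd: "d = d1 * d2" "d1 dvd b" "d2 dvd c" using PSD[OF ps] d by blast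
  have "d1 dvd d" "d2 dvd d" using dd(1) by simp_all
  then have "d1 dvd a" "d2 dvd a" using d dvd_trans by blast+
  then have "munit d1" "munit d2" using assms(2,3) dd(2,3) unfolding relprime_def by blast+
  then show "munit d" using dd(1) munit_mult by simp
qed

lemma relprime_power:
  assumes ps: "pre_Schreier (T::'a::comm_monoid_mult itself)"
    and "relprime (a::'a) b" shows "relprime a (b^k)"
proof (induction k)
  case 0 show ?case by (simp add: relprime_1)
next
  case (Suc k) show ?case unfolding power_Suc by (rule relprime_mult[OF ps assms(2) Suc.IH])
qed

lemma relprime_prod:
  assumes ps: "pre_Schreier (T::'a::comm_monoid_mult itself)"
    and "finite J" "\<forall>i\<in>J. relprime (a::'a) (f i)" shows "relprime a (prod f J)"
  using assms(2,3)
proof (induction J rule: finite_induct)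
  case empty show ?case by (simp add: relprime_1)
next
  case (insert x F)
  have "relprime a (f x)" "relprime a (prod f F)" using insert by simp_all
  then have "relprime a (f x * prod f F)" by (rule relprime_mult[OF ps])
  then show ?case using insert.hyps by simp
qed

lemma Sqf_mult:
  assumes ps: "pre_Schreier (T::'a::comm_monoid_mult itself)"
    and s: "Sqf (s::'a)" and t: "Sqf t" and r: "relprime s t" shows "Sqf (s*t)"
  unfolding Sqf_iff
proof (intro allI impI)
  fix b assume b2: "b^2 dvd s*t"
  then have "b dvd s * t" by (metis dvd_mult_left power2_eq_square)
  then obtain b1 b2 where bb: "b = b1 * b2" "b1 dvd s" "b2 dvd t" using PSD[OF ps] by blast
  have r1: "relprime b1 t" using relprime_dvd[OF r bb(2)] .
  have r2: "relprime b2 s" using relprime_dvd[OF relprime_sym[OF r] bb(3)] .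
  have "b^2 = b1^2 * b2^2" using bb by (simp add: power_mult_distrib)
  then have "b1^2 dvd b^2" "b2^2 dvd b^2" by simp_all
  then have h1: "b1^2 dvd t*s" and h2: "b2^2 dvd s*t"
    using dvd_trans[OF _ b2] by (simp_all add: ac_simps)
  have "relprime (b1^2) t" using relprime_power[OF ps relprime_sym[OF r1], of 2] relprime_sym by blast
  then have "b1^2 dvd s" using relprime_dvd_mult[OF ps _ h1] by blast
  then have "munit b1" using s unfolding Sqf_iff by blast
  have "relprime (b2^2) s" using relprime_power[OF ps relprime_sym[OF r2], of 2] relprime_sym by blast
  then have "b2^2 dvd t" using relprime_dvd_mult[OF ps _ h2] by blast
  then have "munit b2" using t unfolding Sqf_iff by blast
  then show "munit b" using \<open>munit b1\<close> bb munit_mult by blast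
qed

definition PCS :: "nat set \<Rightarrow> (nat \<Rightarrow> 'a::comm_monoid_mult) \<Rightarrow> bool" where
  "PCS I s \<longleftrightarrow> (\<forall>i\<in>I. Sqf (s i)) \<and> (\<forall>i\<in>I. \<forall>j\<in>I. i \<noteq> j \<longrightarrow> relprime (s i) (s j))"

lemma Sqf_prod:
  assumes ps: "pre_Schreier (T::'a::comm_monoid_mult itself)"
    and "PCS I (s::nat \<Rightarrow> 'a)" "finite J" "J \<subseteq> I" shows "Sqf (prod s J)"
  using assms(3,4)
proof (induction J rule: finite_induct)
  case empty
  show ?case by (simp add: Sqf_1)
next
  case (insert x F)
  have sq: "\<forall>i\<in>I. Sqf (s i)" and pc: "\<forall>i\<in>I. \<forall>j\<in>I. i \<noteq> j \<longrightarrow> relprime (s i) (s j)"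
    using assms(2) unfolding PCS_def by simp_all
  have FI: "F \<subseteq> I" "x \<in> I" using insert.prems by simp_all
  have "\<forall>i\<in>F. relprime (s x) (s i)"
  proof
    fix i assume iF: "i \<in> F"
    then have "i \<noteq> x" using insert.hyps(2) by metis
    moreover have "i \<in> I" using iF FI by (rule_tac subsetD)
    ultimately show "relprime (s x) (s i)" using pc FI(2) by simp
  qed
  then have "relprime (s x) (prod s F)"
    using insert.hyps(1) by (rule_tac relprime_prod[OF ps])
  moreover have "Sqf (s x)" using sq FI(2) by simp
  moreover have "Sqf (prod s F)" using insert.IH FI(1) by simp
  ultimately have "Sqf (s x * prod s F)" by (rule Sqf_mult[OF ps, rotated 2])
  then show ?case using insert.hyps by simp
qed

lemma dvd_both:
  assumes ps: "pre_Schreier (T::'a::comm_monoid_mult itself)"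
    and "x dvd d" "y dvd (d::'a)" "relprime x y" shows "x * y dvd d"
proof -
  obtain d' where d: "d = x * d'" using assms(2) by (auto simp: dvd_def)
  have "y dvd x * d'" using assms(3) d by simp
  then have "y dvd d'" by (rule relprime_dvd_mult[OF ps relprime_sym[OF assms(4)]])
  then show ?thesis using d by (simp add: mult_dvd_mono)
qed

lemma Sqf_dvd_power:
  assumes ps: "pre_Schreier (T::'a::comm_monoid_mult itself)"
  shows "Sqf e \<Longrightarrow> e dvd (d::'a)^n \<Longrightarrow> e dvd d"
proof (induction n arbitrary: e)
  case 0
  then have "munit e" unfolding munit_def by simp
  then show ?case by (rule munit_dvd_any)
next
  case (Suc n)
  obtain e1 e2 where ee: "e = e1*e2" "e1 dvd d" "e2 dvd d^n" using PSD[OF ps Suc.prems(2)[unfolded power_Suc]] by blast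
  have "Sqf e2" by (rule Sqf_dvd[OF Suc.prems(1)]) (simp add: ee)
  then have "e2 dvd d" by (rule Suc.IH[OF _ ee(3)])
  moreover have "relprime e1 e2" by (rule Sqf_coprime[OF Suc.prems(1)]) (simp add: ee)
  ultimately show ?case using dvd_both[OF ps ee(2)] ee(1) by simp
qed


lemma dvd_prod_mem: "finite A \<Longrightarrow> a \<in> A \<Longrightarrow> (f a::'a::comm_monoid_mult) dvd prod f A"
  by (simp add: prod.remove)

lemma prod_1_Suc: "(\<Prod>i=1..Suc n. f i) = f 1 * (\<Prod>i=1..n. f (Suc i))"
proof -
  have "(\<Prod>i=1..Suc n. f i) = f 1 * (\<Prod>i=Suc 1..Suc n. f i)"
    by (rule prod.atLeast_Suc_atMost) simp
  also have "(\<Prod>i=Suc 1..Suc n. f i) = (\<Prod>i=1..n. f (Suc i))"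
    by (rule prod.shift_bounds_cl_Suc_ivl)
  finally show ?thesis .
qed

lemma one_two_aux:
  assumes ps: "pre_Schreier (T::'a::comm_monoid_mult itself)"
  shows "PCS {1..n} (s::nat \<Rightarrow> 'a) \<Longrightarrow> \<exists>t. (\<forall>i\<in>{1..n}. Sqf (t i)) \<and> (\<forall>i. 1 \<le> i \<and> i < n \<longrightarrow> t i dvd t (i+1)) \<and>
     (\<Prod>i=1..n. s i ^ i) = (\<Prod>i=1..n. t i) \<and> t n = (\<Prod>i=1..n. s i)"
proof (induction n arbitrary: s)
  case 0
  show ?case by (rule exI[of _ "\<lambda>_. 1"]) simp
next
  case (Suc n)
  have "PCS {1..n} (\<lambda>i. s (Suc i))" using Suc.prems unfolding PCS_def by auto
  then obtain t' where t': "\<forall>i\<in>{1..n}. Sqf (t' i)" "\<forall>i. 1 \<le> i \<and> i < n \<longrightarrow> t' i dvd t' (i+1)"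
     "(\<Prod>i=1..n. s (Suc i) ^ i) = (\<Prod>i=1..n. t' i)" "t' n = (\<Prod>i=1..n. s (Suc i))"
    using Suc.IH by blast
  define t where "t = t'(Suc n := s 1 * t' n)"
  have P1: "(\<Prod>i=1..Suc n. s i) = s 1 * t' n" unfolding prod_1_Suc using t'(4) by simp
  have "(\<Prod>i=1..Suc n. s i ^ i) = (\<Prod>i=0..n. s (Suc i) ^ (Suc i))"
    using prod.shift_bounds_cl_Suc_ivl[of "\<lambda>i. s i ^ i" 0 n] by simp
  also have "\<dots> = (\<Prod>i=0..n. s (Suc i)) * (\<Prod>i=0..n. s (Suc i) ^ i)"
    by (simp add: prod.distrib)
  also have "(\<Prod>i=0..n. s (Suc i)) = (\<Prod>i=1..Suc n. s i)"
    using prod.shift_bounds_cl_Suc_ivl[of s 0 n] by simp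
  also have "(\<Prod>i=0..n. s (Suc i) ^ i) = (\<Prod>i=1..n. s (Suc i) ^ i)"
    by (simp add: prod.atLeast_Suc_atMost)
  finally have P2: "(\<Prod>i=1..Suc n. s i ^ i) = (\<Prod>i=1..Suc n. s i) * (\<Prod>i=1..n. s (Suc i) ^ i)" .
  have tt: "(\<Prod>i=1..n. t i) = (\<Prod>i=1..n. t' i)" unfolding t_def by (rule prod.cong) auto
  have "(\<Prod>i=1..Suc n. t i) = (\<Prod>i=1..n. t i) * t (Suc n)" by simp
  also have "\<dots> = (\<Prod>i=1..n. s (Suc i) ^ i) * (\<Prod>i=1..Suc n. s i)"
    using tt t'(3) P1 unfolding t_def by simp
  finally have P3: "(\<Prod>i=1..Suc n. s i ^ i) = (\<Prod>i=1..Suc n. t i)" using P2 by (simp add: ac_simps)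
  have sq: "Sqf (\<Prod>i=1..Suc n. s i)" by (rule Sqf_prod[OF ps Suc.prems]) auto
  have A1: "\<forall>i\<in>{1..Suc n}. Sqf (t i)"
  proof
    fix i assume "i \<in> {1..Suc n}"
    then consider "i = Suc n" | "i \<in> {1..n}" by fastforce
    then show "Sqf (t i)"
    proof cases
      case 1 then show ?thesis using sq P1 unfolding t_def by simp
    next
      case 2 then show ?thesis using t'(1) unfolding t_def by simp
    qed
  qed
  have A2: "\<forall>i. 1 \<le> i \<and> i < Suc n \<longrightarrow> t i dvd t (i+1)"
  proof (intro allI impI)
    fix i assume i: "1 \<le> i \<and> i < Suc n"
    then consider "i = n" | "i < n" by fastforce
    then show "t i dvd t (i+1)"
    proof cases
      case 1 then show ?thesis unfolding t_def by simp
    next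
      case 2 then show ?thesis using t'(2) i unfolding t_def by simp
    qed
  qed
  have A3: "t (Suc n) = (\<Prod>i=1..Suc n. s i)" using P1 unfolding t_def by simp
  show ?case using A1 A2 A3 P3 by blast
qed

lemma two_one_aux:
  shows "1 \<le> n \<Longrightarrow> \<forall>i\<in>{1..n}. Sqf ((t::nat \<Rightarrow> 'a::comm_monoid_mult) i) \<Longrightarrow>
    \<forall>i. 1 \<le> i \<and> i < n \<longrightarrow> t i dvd t (i+1) \<Longrightarrow>
    \<exists>s. PCS {1..n} s \<and> (\<Prod>i=1..n. t i) = (\<Prod>i=1..n. s i ^ i) \<and> t n = (\<Prod>i=1..n. s i)"
proof (induction n rule: nat_induct_at_least)
  case base
  show ?case by (rule exI[of _ t]) (simp add: PCS_def base.prems)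
next
  case (Suc n)
  obtain s where s: "PCS {1..n} s" "(\<Prod>i=1..n. t i) = (\<Prod>i=1..n. s i ^ i)" "t n = (\<Prod>i=1..n. s i)"
    using Suc.IH Suc.prems by auto
  have "t n dvd t (Suc n)" using Suc.prems(2) Suc.hyps by simp
  then obtain r where r: "t (Suc n) = t n * r" by (auto simp: dvd_def)
  define s' where "s' = (\<lambda>i. if i = 1 then r else s (i - 1))"
  have s'S: "s' (Suc i) = s i" if "i \<ge> 1" for i using that unfolding s'_def by simp
  have Q1: "(\<Prod>i=1..n. s' (Suc i)) = (\<Prod>i=1..n. s i)" by (rule prod.cong) (auto simp: s'S)
  have Q2: "(\<Prod>i=1..n. s' (Suc i) ^ Suc i) = (\<Prod>i=1..n. s i ^ Suc i)" by (rule prod.cong) (auto simp: s'S)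
  have "(\<Prod>i=1..Suc n. s' i ^ i) = r * (\<Prod>i=1..n. s i ^ Suc i)"
    unfolding prod_1_Suc Q2 by (simp add: s'_def)
  also have "(\<Prod>i=1..n. s i ^ Suc i) = (\<Prod>i=1..n. s i) * (\<Prod>i=1..n. s i ^ i)"
    by (simp add: prod.distrib)
  finally have "(\<Prod>i=1..Suc n. s' i ^ i) = t (Suc n) * (\<Prod>i=1..n. t i)"
    using r s by (simp add: ac_simps)
  then have B1: "(\<Prod>i=1..Suc n. t i) = (\<Prod>i=1..Suc n. s' i ^ i)" by (simp add: ac_simps)
  have B2: "t (Suc n) = (\<Prod>i=1..Suc n. s' i)"
    using r s(3) unfolding prod_1_Suc Q1 by (simp add: s'_def ac_simps)
  have sqS: "Sqf (t (Suc n))" using Suc.prems(1) by simp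
  have sdv: "s j dvd t n" if "j \<in> {1..n}" for j unfolding s(3) by (rule dvd_prod_mem) (use that in simp_all)
  have rel1: "relprime r (s (j - 1))" if "j \<in> {1..Suc n}" "j \<noteq> 1" for j
  proof -
    have "j - 1 \<in> {1..n}" using that by auto
    then have "r * s (j - 1) dvd r * t n" using sdv by (simp add: mult_dvd_mono)
    then have "r * s (j - 1) dvd t (Suc n)" using r by (simp add: ac_simps)
    then show ?thesis by (rule Sqf_coprime[OF sqS])
  qed
  have B3: "PCS {1..Suc n} s'"
    unfolding PCS_def
  proof (intro conjI ballI impI)
    fix i assume i: "i \<in> {1..Suc n}"
    show "Sqf (s' i)"
    proof (cases "i = 1")
      case True
      have "r dvd t (Suc n)" using r by simp
      then show ?thesis using True Sqf_dvd[OF sqS] unfolding s'_def by simp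
    next
      case False
      then have "i - 1 \<in> {1..n}" using i by auto
      then show ?thesis using s(1) False unfolding PCS_def s'_def by simp
    qed
  next
    fix i j assume i: "i \<in> {1..Suc n}" and j: "j \<in> {1..Suc n}" and ij: "i \<noteq> j"
    show "relprime (s' i) (s' j)"
    proof (cases "i = 1")
      case True
      then show ?thesis using rel1[OF j] ij unfolding s'_def by simp
    next
      case False
      show ?thesis
      proof (cases "j = 1")
        case True
        then show ?thesis using rel1[OF i False] False relprime_sym unfolding s'_def by simp
      next
        case F2: False
        have "i - 1 \<in> {1..n}" "j - 1 \<in> {1..n}" "i - 1 \<noteq> j - 1" using i j ij False F2 by auto
        then show ?thesis using s(1) False F2 unfolding PCS_def s'_def by simp
      qed
    qed
  qed
  show ?case using B1 B2 B3 by blast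
qed


lemma prod_pow: "(prod f A) ^ n = prod (\<lambda>x. (f x::'a::comm_monoid_mult) ^ n) A"
  by (induction A rule: infinite_finite_induct) (simp_all add: power_mult_distrib)

lemma pow_split: "(x::'a::comm_monoid_mult) ^ e = (if odd e then x else 1) * (x ^ (e div 2))^2"
proof (cases "odd e")
  case True
  then have "e = Suc (e div 2 * 2)" by presburger
  then have "x ^ e = x * x ^ (e div 2 * 2)" by (metis power_Suc)
  then show ?thesis using True by (simp add: power_mult)
next
  case False
  then have "e = e div 2 * 2" by simp
  then have "x ^ e = x ^ (e div 2 * 2)" by simp
  then show ?thesis using False by (simp add: power_mult)
qed

lemma three_aux:
  assumes ps: "pre_Schreier (T::'a::comm_monoid_mult itself)"
    and pcs: "PCS I (s::nat \<Rightarrow> 'a)" and fin: "finite I"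
  shows "\<forall>e. (\<forall>i\<in>I. e i < 2^m) \<longrightarrow> (\<exists>N u. (\<forall>j\<in>{0..N}. Sqf (u j)) \<and>
           (\<Prod>i\<in>I. s i ^ e i) = (\<Prod>j=0..N. u j ^ 2^j))"
proof (induction m)
  case 0
  show ?case
  proof (intro allI impI)
    fix e :: "nat \<Rightarrow> nat" assume "\<forall>i\<in>I. e i < 2^0"
    then have "(\<Prod>i\<in>I. s i ^ e i) = 1" by (intro prod.neutral) simp
    then show "\<exists>N u. (\<forall>j\<in>{0..N}. Sqf (u j)) \<and> (\<Prod>i\<in>I. s i ^ e i) = (\<Prod>j=0..N. u j ^ 2^j)"
      by (intro exI[of _ 0] exI[of _ "\<lambda>_. 1"]) (simp add: Sqf_1)
  qed
next
  case (Suc m)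
  show ?case
  proof (intro allI impI)
    fix e :: "nat \<Rightarrow> nat" assume e: "\<forall>i\<in>I. e i < 2^Suc m"
    have ed: "\<forall>i\<in>I. e i div 2 < 2^m" using e by auto
    obtain N v where v: "\<forall>j\<in>{0..N}. Sqf (v j)"
       "(\<Prod>i\<in>I. s i ^ (e i div 2)) = (\<Prod>j=0..N. v j ^ 2^j)"
      using spec[OF Suc.IH, of "\<lambda>i. e i div 2"] ed by blast
    define u0 where "u0 = (\<Prod>i\<in>{i\<in>I. odd (e i)}. s i)"
    have sq0: "Sqf u0" unfolding u0_def by (rule Sqf_prod[OF ps pcs]) (use fin in auto)
    have "(\<Prod>i\<in>I. s i ^ e i) = (\<Prod>i\<in>I. (if odd (e i) then s i else 1) * (s i ^ (e i div 2))^2)"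
      by (rule prod.cong) (simp_all only: pow_split[symmetric])
    also have "\<dots> = (\<Prod>i\<in>I. (if odd (e i) then s i else 1)) * (\<Prod>i\<in>I. s i ^ (e i div 2))^2"
      by (simp only: prod.distrib prod_pow)
    also have "(\<Prod>i\<in>I. (if odd (e i) then s i else 1)) = u0"
      unfolding u0_def using prod.inter_filter[OF fin, of s "\<lambda>i. odd (e i)"] by simp
    also have "(\<Prod>i\<in>I. s i ^ (e i div 2))^2 = (\<Prod>j=0..N. v j ^ 2^(Suc j))"
      unfolding v(2) prod_pow by (simp add: power_mult[symmetric] mult.commute)
    finally have E: "(\<Prod>i\<in>I. s i ^ e i) = u0 * (\<Prod>j=0..N. v j ^ 2^(Suc j))" .
    define w where "w = (\<lambda>j. if j = 0 then u0 else v (j - 1))"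
    have "(\<Prod>j=0..Suc N. w j ^ 2^j) = u0 * (\<Prod>j=0..N. v j ^ 2^(Suc j))"
      unfolding prod.atLeast0_atMost_Suc_shift by (simp add: w_def)
    moreover have "\<forall>j\<in>{0..Suc N}. Sqf (w j)" using sq0 v(1) unfolding w_def by auto
    ultimately show "\<exists>N u. (\<forall>j\<in>{0..N}. Sqf (u j)) \<and> (\<Prod>i\<in>I. s i ^ e i) = (\<Prod>j=0..N. u j ^ 2^j)"
      using E by metis
  qed
qed


lemma list_prod: "\<exists>s. (\<Prod>i=1..length xs. s i) = prod_list (xs::'a::comm_monoid_mult list) \<and>
   (\<forall>i\<in>{1..length xs}. s i \<in> set xs)"
proof (induction xs rule: rev_induct)
  case Nil
  show ?case by (rule exI[of _ "\<lambda>_. 1"]) simp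
next
  case (snoc x xs)
  obtain s where s: "(\<Prod>i=1..length xs. s i) = prod_list xs" "\<forall>i\<in>{1..length xs}. s i \<in> set xs"
    using snoc.IH by blast
  define s' where "s' = s(Suc (length xs) := x)"
  have "(\<Prod>i=1..length xs. s' i) = (\<Prod>i=1..length xs. s i)" unfolding s'_def by (rule prod.cong) auto
  then have "(\<Prod>i=1..length (xs @ [x]). s' i) = prod_list (xs @ [x])"
    using s(1) by (simp add: s'_def)
  moreover have "\<forall>i\<in>{1..length (xs @ [x])}. s' i \<in> set (xs @ [x])"
    using s(2) unfolding s'_def by auto
  ultimately show ?case by blast
qed

lemma sqf_list_cond0: "\<forall>x\<in>set xs. Sqf x \<Longrightarrow>
  \<exists>n::nat \<ge> 1. \<exists>s. (\<forall>i\<in>{1..n}. Sqf (s i)) \<and> prod_list (xs::'a::comm_monoid_mult list) = (\<Prod>i=1..n. s i)"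
proof -
  assume xs: "\<forall>x\<in>set xs. Sqf x"
  obtain s where s: "(\<Prod>i=1..length (xs@[1]). s i) = prod_list (xs@[1])"
     "\<forall>i\<in>{1..length (xs@[1])}. s i \<in> set (xs@[1])"
    using list_prod by blast
  have "\<forall>i\<in>{1..length (xs@[1])}. Sqf (s i)" using s(2) xs Sqf_1 by auto
  moreover have "prod_list xs = (\<Prod>i=1..length (xs@[1]). s i)" using s(1) by simp
  moreover have "length (xs@[1]) \<ge> 1" by simp
  ultimately show ?thesis by blast
qed

lemma prod_pow_list: "finite I \<Longrightarrow> \<forall>i\<in>I. Sqf (f i) \<Longrightarrow>
   \<exists>xs. (\<forall>x\<in>set xs. Sqf x) \<and> (\<Prod>i\<in>I. (f i::'a::comm_monoid_mult) ^ k i) = prod_list xs"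
proof (induction I rule: finite_induct)
  case empty show ?case by (rule exI[of _ "[]"]) simp
next
  case (insert x F)
  obtain xs where xs: "\<forall>x\<in>set xs. Sqf x" "(\<Prod>i\<in>F. f i ^ k i) = prod_list xs"
    using insert by auto
  have "\<forall>y\<in>set (replicate (k x) (f x) @ xs). Sqf y" using xs(1) insert.prems by auto
  moreover have "(\<Prod>i\<in>insert x F. f i ^ k i) = prod_list (replicate (k x) (f x) @ xs)"
    using insert.hyps xs(2) by simp
  ultimately show ?case by blast
qed

lemma split5:
  assumes ps: "pre_Schreier (T::'a::comm_monoid_mult itself)" and c: "Sqf (c::'a)"
  shows "b dvd c^k \<Longrightarrow> \<exists>d c'. c = d*c' \<and> d dvd b \<and> b dvd d^k \<and> relprime c' b"
proof (induction k arbitrary: b)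
  case 0
  then have "munit b" unfolding munit_def by simp
  then have "relprime c b" using relprime_unit relprime_sym by blast
  then show ?case using 0 by (intro exI[of _ 1] exI[of _ c]) simp
next
  case (Suc k)
  have "b dvd c * c^k" using Suc.prems by simp
  then obtain b1 b2 where bb: "b = b1*b2" "b1 dvd c" "b2 dvd c^k" using PSD[OF ps] by blast
  obtain d2 c2 where dc: "c = d2*c2" "d2 dvd b2" "b2 dvd d2^k" "relprime c2 b2"
    using Suc.IH[OF bb(3)] by blast
  have "b1 dvd d2 * c2" using bb(2) dc(1) by simp
  then obtain e1 e2 where ee: "b1 = e1*e2" "e1 dvd d2" "e2 dvd c2" using PSD[OF ps] by blast
  obtain c' where c': "c2 = e2 * c'" using ee(3) by (auto simp: dvd_def)
  define d where "d = d2 * e2"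
  have C1: "c = d * c'" using dc(1) c' unfolding d_def by (simp add: ac_simps)
  have B: "b = (e1 * b2) * e2" using bb(1) ee(1) by (simp add: ac_simps)
  have "d2 * e2 dvd b2 * (e1 * e2)" using dc(2) by (rule mult_dvd_mono) simp
  then have C2: "d dvd b" unfolding d_def using B by (simp add: ac_simps)
  have "e1 * b2 dvd d2 * d2^k" using ee(2) dc(3) by (rule mult_dvd_mono)
  then have "(e1 * b2) * e2 dvd (d2 * d2^k) * (e2 * e2^k)" by (rule mult_dvd_mono) simp
  then have C3: "b dvd d^Suc k" using B unfolding d_def by (simp add: power_mult_distrib ac_simps)
  have r1: "relprime c' b2" using relprime_dvd[OF dc(4)] c' by simp
  have "e2 * c' dvd c" using dc(1) c' by simp
  then have r2: "relprime c' e2" using Sqf_coprime[OF c] relprime_sym by blast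
  have "d2 * c' dvd c" using dc(1) c' by (simp add: ac_simps mult_dvd_mono)
  then have "relprime d2 c'" using Sqf_coprime[OF c] by blast
  then have r3: "relprime c' e1" using relprime_dvd ee(2) relprime_sym by blast
  have "relprime c' (e1 * e2)" using r3 r2 by (rule relprime_mult[OF ps])
  then have "relprime c' ((e1 * e2) * b2)" using r1 by (rule relprime_mult[OF ps])
  then have C4: "relprime c' b" using bb(1) ee(1) by simp
  show ?case using C1 C2 C3 C4 by blast
qed

lemma chain_dvd:
  assumes ch: "\<forall>i. 1 \<le> i \<and> i < n \<longrightarrow> t i dvd t (i+1)" and i: "1 \<le> i"
  shows "i \<le> (j::nat) \<Longrightarrow> j \<le> n \<Longrightarrow> t i dvd (t j::'a::comm_monoid_mult)"
proof (induction j rule: dec_induct)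
  case base show ?case by simp
next
  case (step m)
  then have "t i dvd t m" "t m dvd t (m+1)" using ch i by auto
  then show ?case using dvd_trans by simp
qed


lemma c1_c2: assumes ps: "pre_Schreier (T::'a::comm_monoid_mult itself)"
  shows "cond1s T \<Longrightarrow> cond2s T"
  unfolding cond1s_def cond2s_def
proof (intro allI)
  fix a :: 'a assume "\<forall>a::'a. \<exists>n::nat \<ge> 1. \<exists>s. (\<forall>i\<in>{1..n}. Sqf (s i)) \<and>
      (\<forall>i\<in>{1..n}. \<forall>j\<in>{1..n}. i \<noteq> j \<longrightarrow> relprime (s i) (s j)) \<and> a = (\<Prod>i=1..n. s i ^ i)"
  then obtain n s where n: "n \<ge> 1" "PCS {1..n} s" "a = (\<Prod>i=1..n. s i ^ i)"
    unfolding PCS_def by blast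
  obtain t where "(\<forall>i\<in>{1..n}. Sqf (t i)) \<and> (\<forall>i. 1 \<le> i \<and> i < n \<longrightarrow> t i dvd t (i+1)) \<and>
     (\<Prod>i=1..n. s i ^ i) = (\<Prod>i=1..n. t i)" using one_two_aux[OF ps n(2)] by blast
  then show "\<exists>n::nat \<ge> 1. \<exists>s. (\<forall>i\<in>{1..n}. Sqf (s i)) \<and>
      (\<forall>i. 1 \<le> i \<and> i < n \<longrightarrow> s i dvd s (i + 1)) \<and> a = (\<Prod>i=1..n. s i)"
    using n by auto
qed

lemma c2_c1: fixes T :: "'a::comm_monoid_mult itself" shows "cond2s T \<Longrightarrow> cond1s T"
  unfolding cond1s_def cond2s_def
proof (intro allI)
  fix a :: 'a assume "\<forall>a::'a. \<exists>n::nat \<ge> 1. \<exists>s. (\<forall>i\<in>{1..n}. Sqf (s i)) \<and>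
      (\<forall>i. 1 \<le> i \<and> i < n \<longrightarrow> s i dvd s (i + 1)) \<and> a = (\<Prod>i=1..n. s i)"
  then obtain n t where n: "(n::nat) \<ge> 1" "\<forall>i\<in>{1..n}. Sqf (t i)" "\<forall>i. 1 \<le> i \<and> i < n \<longrightarrow> t i dvd t (i + 1)"
     "a = (\<Prod>i=1..n. t i)" by blast
  obtain s where "PCS {1..n} s" "(\<Prod>i=1..n. t i) = (\<Prod>i=1..n. s i ^ i)"
    using two_one_aux[OF n(1,2,3)] by blast
  then show "\<exists>n::nat \<ge> 1. \<exists>s. (\<forall>i\<in>{1..n}. Sqf (s i)) \<and>
      (\<forall>i\<in>{1..n}. \<forall>j\<in>{1..n}. i \<noteq> j \<longrightarrow> relprime (s i) (s j)) \<and> a = (\<Prod>i=1..n. s i ^ i)"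
    using n unfolding PCS_def by auto
qed

lemma c2_c0: fixes T :: "'a::comm_monoid_mult itself" shows "cond2s T \<Longrightarrow> cond0s T"
  unfolding cond0s_def cond2s_def by blast

lemma c1_c3: assumes ps: "pre_Schreier (T::'a::comm_monoid_mult itself)"
  shows "cond1s T \<Longrightarrow> cond3s T"
  unfolding cond1s_def cond3s_def
proof (intro allI)
  fix a :: 'a assume "\<forall>a::'a. \<exists>n::nat \<ge> 1. \<exists>s. (\<forall>i\<in>{1..n}. Sqf (s i)) \<and>
      (\<forall>i\<in>{1..n}. \<forall>j\<in>{1..n}. i \<noteq> j \<longrightarrow> relprime (s i) (s j)) \<and> a = (\<Prod>i=1..n. s i ^ i)"
  then obtain n s where n: "n \<ge> 1" "PCS {1..n} s" "a = (\<Prod>i=1..n. s i ^ i)"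
    unfolding PCS_def by blast
  have "\<forall>i\<in>{1..n}. id i < 2^n"
  proof
    fix i assume "i \<in> {1..n}"
    then have "i \<le> n" by simp
    then have "i < 2^n" using less_exp[of n] by linarith
    then show "id i < 2^n" by simp
  qed
  then obtain N u where "\<forall>j\<in>{0..N}. Sqf (u j)" "(\<Prod>i\<in>{1..n}. s i ^ id i) = (\<Prod>j=0..N. u j ^ 2^j)"
    using spec[OF three_aux[OF ps n(2), of n], of id] by auto
  then show "\<exists>n. \<exists>s. (\<forall>i\<in>{0..n}. Sqf (s i)) \<and> a = (\<Prod>i=0..n. s i ^ (2 ^ i))"
    using n(3) by auto
qed

lemma c3_c0: fixes T :: "'a::comm_monoid_mult itself" shows "cond3s T \<Longrightarrow> cond0s T"
  unfolding cond3s_def cond0s_def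
proof (intro allI)
  fix a :: 'a assume "\<forall>a::'a. \<exists>n. \<exists>s. (\<forall>i\<in>{0..n}. Sqf (s i)) \<and> a = (\<Prod>i=0..n. s i ^ (2 ^ i))"
  then obtain n s where n: "\<forall>i\<in>{0..n}. Sqf (s i)" "a = (\<Prod>i=0..n. s i ^ (2 ^ i))" by blast
  obtain xs where "\<forall>x\<in>set xs. Sqf x" "(\<Prod>i\<in>{0..n}. s i ^ (\<lambda>i. 2^i) i) = prod_list xs"
    using prod_pow_list[of "{0..n}" s] n(1) by blast
  then show "\<exists>n::nat \<ge> 1. \<exists>s. (\<forall>i\<in>{1..n}. Sqf (s i)) \<and> a = (\<Prod>i=1..n. s i)"
    using sqf_list_cond0 n(2) by simp
qed


lemma c1_c4: assumes ps: "pre_Schreier (T::'a::comm_monoid_mult itself)"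
  shows "cond1s T \<Longrightarrow> cond4s T"
  unfolding cond1s_def cond4s_def
proof (intro allI)
  fix a :: 'a assume "\<forall>a::'a. \<exists>n::nat \<ge> 1. \<exists>s. (\<forall>i\<in>{1..n}. Sqf (s i)) \<and>
      (\<forall>i\<in>{1..n}. \<forall>j\<in>{1..n}. i \<noteq> j \<longrightarrow> relprime (s i) (s j)) \<and> a = (\<Prod>i=1..n. s i ^ i)"
  then obtain n s where n: "n \<ge> 1" "PCS {1..n} s" "a = (\<Prod>i=1..n. s i ^ i)"
    unfolding PCS_def by blast
  define b where "b = (\<Prod>i=Suc 1..n. s i ^ i)"
  define c where "c = s 1"
  define d where "d = (\<Prod>i=Suc 1..n. s i)"
  have "a = s 1 ^ 1 * (\<Prod>i=Suc 1..n. s i ^ i)" unfolding n(3) by (rule prod.atLeast_Suc_atMost) (use n in simp)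
  then have D1: "a = b * c" unfolding b_def c_def by (simp add: ac_simps)
  have D2: "Sqf c" using n(2) n(1) unfolding PCS_def c_def by simp
  have "\<forall>i\<in>{Suc 1..n}. relprime c (s i ^ i)"
  proof
    fix i assume "i \<in> {Suc 1..n}"
    then have "relprime (s 1) (s i)" using n unfolding PCS_def by auto
    then show "relprime c (s i ^ i)" unfolding c_def by (rule relprime_power[OF ps])
  qed
  then have "relprime c b" unfolding b_def by (intro relprime_prod[OF ps]) auto
  then have D3: "relprime b c" by (rule relprime_sym)
  have D4: "Sqf d" unfolding d_def by (rule Sqf_prod[OF ps n(2)]) auto
  have "d^2 dvd b" unfolding d_def b_def prod_pow
    by (rule prod_dvd_prod) (simp add: pow_le_dvd)
  moreover have "b dvd d^n" unfolding d_def b_def prod_pow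
    by (rule prod_dvd_prod) (simp add: pow_le_dvd)
  ultimately show "\<exists>b c. a = b * c \<and> Sqf c \<and> relprime b c \<and>
      (\<exists>d. Sqf d \<and> d^2 dvd b \<and> (\<exists>n::nat \<ge> 1. b dvd d ^ n))"
    using D1 D2 D3 D4 n(1) by blast
qed

lemma c2_c5: fixes T :: "'a::comm_monoid_mult itself" shows "cond2s T \<Longrightarrow> cond5s T"
  unfolding cond2s_def cond5s_def
proof (intro allI)
  fix a :: 'a assume "\<forall>a::'a. \<exists>n::nat \<ge> 1. \<exists>s. (\<forall>i\<in>{1..n}. Sqf (s i)) \<and>
      (\<forall>i. 1 \<le> i \<and> i < n \<longrightarrow> s i dvd s (i + 1)) \<and> a = (\<Prod>i=1..n. s i)"
  then obtain n t where n: "(n::nat) \<ge> 1" "\<forall>i\<in>{1..n}. Sqf (t i)" "\<forall>i. 1 \<le> i \<and> i < n \<longrightarrow> t i dvd t (i + 1)"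
     "a = (\<Prod>i=1..n. t i)" by blast
  obtain m where m: "n = Suc m" using n(1) by (cases n) auto
  have E1: "a = (\<Prod>i=1..m. t i) * t n" using n(4) m by simp
  have E2: "Sqf (t n)" using n(1,2) by simp
  have "(\<Prod>i=1..n. t i) dvd (\<Prod>i=1..n. t n)"
    by (rule prod_dvd_prod) (use chain_dvd[OF n(3)] in auto)
  then have E3: "a dvd t n ^ n" using n(4) by simp
  show "\<exists>b c. a = b * c \<and> Sqf c \<and> (\<exists>n::nat \<ge> 1. a dvd c ^ n)"
    using E1 E2 E3 n(1) by blast
qed

lemma c3_c6: fixes T :: "'a::comm_monoid_mult itself" shows "cond3s T \<Longrightarrow> cond6s T"
  unfolding cond3s_def cond6s_def
proof (intro allI)
  fix a :: 'a assume "\<forall>a::'a. \<exists>n. \<exists>s. (\<forall>i\<in>{0..n}. Sqf (s i)) \<and> a = (\<Prod>i=0..n. s i ^ (2 ^ i))"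
  then obtain n s where n: "\<forall>i\<in>{0..n}. Sqf (s i)" "a = (\<Prod>i=0..n. s i ^ (2 ^ i))" by blast
  have "a = s 0 ^ 2^0 * (\<Prod>i=Suc 0..n. s i ^ (2 ^ i))" unfolding n(2) by (rule prod.atLeast_Suc_atMost) simp
  also have "(\<Prod>i=Suc 0..n. s i ^ (2 ^ i)) = (\<Prod>i=1..n. s i ^ (2 ^ (i - 1)))^2"
    unfolding prod_pow
  proof (rule prod.cong)
    fix i assume "i \<in> {1..n}"
    then have "2 ^ i = (2::nat) ^ (i - 1) * 2" by (cases i) auto
    then show "s i ^ 2 ^ i = (s i ^ 2 ^ (i - 1))^2" by (simp add: power_mult[symmetric])
  qed simp
  finally have "a = (\<Prod>i=1..n. s i ^ (2 ^ (i - 1)))^2 * s 0" by (simp add: ac_simps)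
  moreover have "Sqf (s 0)" using n(1) by simp
  ultimately show "\<exists>b c. a = b^2 * c \<and> Sqf c" by blast
qed

lemma c4_c5: assumes ps: "pre_Schreier (T::'a::comm_monoid_mult itself)"
  shows "cond4s T \<Longrightarrow> cond5s T"
  unfolding cond4s_def cond5s_def
proof (intro allI)
  fix a :: 'a assume "\<forall>a::'a. \<exists>b c. a = b * c \<and> Sqf c \<and> relprime b c \<and>
      (\<exists>d. Sqf d \<and> d^2 dvd b \<and> (\<exists>n::nat \<ge> 1. b dvd d ^ n))"
  then have "\<exists>b c. a = b * c \<and> Sqf c \<and> relprime b c \<and>
      (\<exists>d. Sqf d \<and> d^2 dvd b \<and> (\<exists>n::nat \<ge> 1. b dvd d ^ n))" by (rule spec)
  then obtain b c where h0: "a = b * c" "Sqf c" "relprime b c" "\<exists>d. Sqf d \<and> d^2 dvd b \<and> (\<exists>n::nat \<ge> 1. b dvd d ^ n)"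
    by blast
  then obtain d where h1: "Sqf d" "d^2 dvd b" "\<exists>n::nat \<ge> 1. b dvd d ^ n" by blast
  then obtain n where h2: "(n::nat) \<ge> 1" "b dvd d^n" by blast
  note h = h0(1,2,3) h1(1,2) h2
  have "d dvd d^2" by (simp add: power2_eq_square)
  then have dB: "d dvd b" using h(5) dvd_trans by blast
  then obtain b' where b': "b = d * b'" by (auto simp: dvd_def)
  have "relprime d c" using relprime_dvd[OF h(3) dB] .
  then have S: "Sqf (d * c)" using Sqf_mult[OF ps h(4) h(2)] by blast
  have F1: "a = b' * (d * c)" using h(1) b' by (simp add: ac_simps)
  have "c dvd c^n" using pow_le_dvd[OF h(6), of c] by simp
  then have "b * c dvd d^n * c^n" using h(7) by (rule mult_dvd_mono[rotated])
  then have F2: "a dvd (d*c)^n" using h(1) by (simp add: power_mult_distrib)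
  show "\<exists>b c. a = b * c \<and> Sqf c \<and> (\<exists>n::nat \<ge> 1. a dvd c ^ n)"
    using F1 F2 S h(6) by blast
qed

lemma c5_c4: assumes ps: "pre_Schreier (T::'a::comm_monoid_mult itself)" and can: "cancellative T"
  shows "cond5s T \<Longrightarrow> cond4s T"
  unfolding cond4s_def cond5s_def
proof (intro allI)
  fix a :: 'a assume "\<forall>a::'a. \<exists>b c. a = b * c \<and> Sqf c \<and> (\<exists>n::nat \<ge> 1. a dvd c ^ n)"
  then have "\<exists>b c. a = b * c \<and> Sqf c \<and> (\<exists>n::nat \<ge> 1. a dvd c ^ n)" by (rule spec)
  then obtain b c where h0: "a = b * c" "Sqf c" "\<exists>n::nat \<ge> 1. a dvd c ^ n" by blast
  then obtain n where h1: "(n::nat) \<ge> 1" "a dvd c^n" by blast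
  note h = h0(1,2) h1
  obtain m where m: "n = Suc m" using h(3) by (cases n) auto
  obtain k where "c^n = a * k" using h(4) by (auto simp: dvd_def)
  then have "c * c^m = c * (b * k)" using h(1) m by (simp add: ac_simps)
  then have "c^m = b * k" using can unfolding cancellative_def by blast
  then have bc: "b dvd c^m" by simp
  obtain d c' where dc: "c = d*c'" "d dvd b" "b dvd d^m" "relprime c' b" using split5[OF ps h(2) bc] by blast
  have G1: "a = (b * d) * c'" using h(1) dc(1) by (simp add: ac_simps)
  have G2: "Sqf c'" using Sqf_dvd[OF h(2)] dc(1) by simp
  have "relprime d c'" using Sqf_coprime[OF h(2)] dc(1) by simp
  then have "relprime c' (b * d)" using relprime_mult[OF ps dc(4)] relprime_sym by blast
  then have G3: "relprime (b * d) c'" by (rule relprime_sym)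
  have G4: "Sqf d" using Sqf_dvd[OF h(2)] dc(1) by simp
  have "d * d dvd b * d" using dc(2) by (rule mult_dvd_mono) simp
  then have G5: "d^2 dvd b * d" by (simp add: power2_eq_square)
  have "b * d dvd d^m * d" using dc(3) by (rule mult_dvd_mono) simp
  then have G6: "b * d dvd d^n" using m by (simp add: ac_simps)
  show "\<exists>b c. a = b * c \<and> Sqf c \<and> relprime b c \<and>
      (\<exists>d. Sqf d \<and> d^2 dvd b \<and> (\<exists>n::nat \<ge> 1. b dvd d ^ n))"
    using G1 G2 G3 G4 G5 G6 h(3) by blast
qed

lemma c4_c4': assumes ps: "pre_Schreier (T::'a::comm_monoid_mult itself)"
  shows "cond4s T \<Longrightarrow> cond4's T"
  unfolding cond4s_def cond4's_def
proof (intro allI)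
  fix a :: 'a assume "\<forall>a::'a. \<exists>b c. a = b * c \<and> Sqf c \<and> relprime b c \<and>
      (\<exists>d. Sqf d \<and> d^2 dvd b \<and> (\<exists>n::nat \<ge> 1. b dvd d ^ n))"
  then have "\<exists>b c. a = b * c \<and> Sqf c \<and> relprime b c \<and>
      (\<exists>d. Sqf d \<and> d^2 dvd b \<and> (\<exists>n::nat \<ge> 1. b dvd d ^ n))" by (rule spec)
  then obtain b c where h0: "a = b * c" "Sqf c" "relprime b c" "\<exists>d. Sqf d \<and> d^2 dvd b \<and> (\<exists>n::nat \<ge> 1. b dvd d ^ n)"
    by blast
  then obtain d where h1: "Sqf d" "d^2 dvd b" "\<exists>n::nat \<ge> 1. b dvd d ^ n" by blast
  then obtain n where h2: "(n::nat) \<ge> 1" "b dvd d^n" by blast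
  note h = h0(1,2,3) h1(1,2) h2
  have "\<forall>e. Sqf e \<and> e dvd b \<longrightarrow> e^2 dvd b"
  proof (intro allI impI)
    fix e assume e: "Sqf e \<and> e dvd b"
    then have en: "e dvd d^n" using h(7) dvd_trans by blast
    have "Sqf e" using e by simp
    then have ed: "e dvd d" using en by (rule Sqf_dvd_power[OF ps])
    have "e * e dvd d * d" by (rule mult_dvd_mono[OF ed ed])
    then have "e^2 dvd d^2" by (simp add: power2_eq_square)
    then show "e^2 dvd b" using h(5) dvd_trans by blast
  qed
  then show "\<exists>b c. a = b * c \<and> Sqf c \<and> relprime b c \<and> (\<forall>d. Sqf d \<and> d dvd b \<longrightarrow> d^2 dvd b)"
    using h by blast
qed

lemma c5_c5': assumes ps: "pre_Schreier (T::'a::comm_monoid_mult itself)"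
  shows "cond5s T \<Longrightarrow> cond5's T"
  unfolding cond5s_def cond5's_def
proof (intro allI)
  fix a :: 'a assume "\<forall>a::'a. \<exists>b c. a = b * c \<and> Sqf c \<and> (\<exists>n::nat \<ge> 1. a dvd c ^ n)"
  then have "\<exists>b c. a = b * c \<and> Sqf c \<and> (\<exists>n::nat \<ge> 1. a dvd c ^ n)" by (rule spec)
  then obtain b c where h0: "a = b * c" "Sqf c" "\<exists>n::nat \<ge> 1. a dvd c ^ n" by blast
  then obtain n where h1: "(n::nat) \<ge> 1" "a dvd c^n" by blast
  note h = h0(1,2) h1
  have "\<forall>e. Sqf e \<and> e dvd a \<longrightarrow> e dvd c"
  proof (intro allI impI)
    fix e assume e: "Sqf e \<and> e dvd a"
    then have "e dvd c^n" using h(4) dvd_trans by blast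
    then show "e dvd c" using Sqf_dvd_power[OF ps] e by blast
  qed
  then show "\<exists>b c. a = b * c \<and> Sqf c \<and> (\<forall>d. Sqf d \<and> d dvd a \<longrightarrow> d dvd c)"
    using h by blast
qed

theorem proposition4p3:
  fixes T :: "'a::comm_monoid_mult itself"
  assumes "cancellative T" and "pre_Schreier T"
  shows "(cond1s T \<longrightarrow> cond0s T) \<and> (cond3s T \<longrightarrow> cond0s T) \<and>
         (cond1s T \<longleftrightarrow> cond2s T) \<and> (cond2s T \<longrightarrow> cond3s T) \<and>
         (cond1s T \<longrightarrow> cond4s T) \<and> (cond2s T \<longrightarrow> cond5s T) \<and>
         (cond3s T \<longrightarrow> cond6s T) \<and> (cond4s T \<longleftrightarrow> cond5s T) \<and>
         (cond4s T \<longrightarrow> cond4's T) \<and> (cond5s T \<longrightarrow> cond5's T)"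
proof (intro conjI impI iffI)
  show "cond1s T \<Longrightarrow> cond0s T" using c1_c2[OF assms(2)] c2_c0[of T] by blast
  show "cond3s T \<Longrightarrow> cond0s T" using c3_c0[of T] by blast
  show "cond1s T \<Longrightarrow> cond2s T" using c1_c2[OF assms(2)] by blast
  show "cond2s T \<Longrightarrow> cond1s T" using c2_c1[of T] by blast
  show "cond2s T \<Longrightarrow> cond3s T" using c2_c1[of T] c1_c3[OF assms(2)] by blast
  show "cond1s T \<Longrightarrow> cond4s T" using c1_c4[OF assms(2)] by blast
  show "cond2s T \<Longrightarrow> cond5s T" using c2_c5[of T] by blast
  show "cond3s T \<Longrightarrow> cond6s T" using c3_c6[of T] by blast
  show "cond4s T \<Longrightarrow> cond5s T" using c4_c5[OF assms(2)] by blast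
  show "cond5s T \<Longrightarrow> cond4s T" using c5_c4[OF assms(2,1)] by blast
  show "cond4s T \<Longrightarrow> cond4's T" using c4_c4'[OF assms(2)] by blast
  show "cond5s T \<Longrightarrow> cond5's T" using c5_c5'[OF assms(2)] by blast
qed

end
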